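(* Let $P$ be a finite poset. There exist a constant $C(P)$ depending only on $P$ and, for each positive integer $n$, a constant $\alpha_n$ depending only on $n$, such that for all integers $n\ge\dim P$ and $k\ge 2$: if $S\subseteq[k]^n$ does not contain a copy of $P$, then $$L_{[k]^n}(S)\le C(P)\,\alpha_n\log k.$$
   Context: $[k]^n$ is the set of $n$-tuples with entries in $[k]=\{1,\dots,k\}$, ordered pointwise. Its levels are $A_i=\{(a_1,\dots,a_n)\in[k]^n: a_1+\dots+a_n=n+i\}$ for $i=0,\dots,kn-n$. For $S\subseteq[k]^n$, the Lubell mass is $L_{[k]^n}(S)=\sum_{i=0}^{kn-n}\frac{|S\cap A_i|}{|A_i|}$. A subset $P'$ of a poset $Q$ is a copy of $P$ if the subposet of $Q$ induced on $P'$ is isomorphic to $P$. The (Dushnik–Miller) dimension $\dim P$ is the smallest positive integer $d$ for which there exist bijections $L_1,\dots,L_d:P\to[|P|]$ such that $p\le_P q$ iff $L_i(p)\le L_i(q)$ for every $i\in[d]$. *)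

theory Defs
  imports Complex_Main "HOL-Library.FuncSet"
begin

definition grid :: "nat \<Rightarrow> nat \<Rightarrow> (nat \<Rightarrow> nat) set" where
  "grid k n = PiE {0..<n} (\<lambda>_. {1..k})"

definition grid_le :: "nat \<Rightarrow> (nat \<Rightarrow> nat) \<Rightarrow> (nat \<Rightarrow> nat) \<Rightarrow> bool" where
  "grid_le n a b \<longleftrightarrow> (\<forall>i<n. a i \<le> b i)"

definition grid_level :: "nat \<Rightarrow> nat \<Rightarrow> nat \<Rightarrow> (nat \<Rightarrow> nat) set" where
  "grid_level k n i = {a \<in> grid k n. (\<Sum>j<n. a j) = n + i}"

definition lubell_mass :: "nat \<Rightarrow> nat \<Rightarrow> (nat \<Rightarrow> nat) set \<Rightarrow> real" where
  "lubell_mass k n S =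
     (\<Sum>i = 0..k*n - n. real (card (S \<inter> grid_level k n i)) / real (card (grid_level k n i)))"

definition contains_copy :: "nat \<Rightarrow> (nat \<Rightarrow> nat) set \<Rightarrow> nat set \<Rightarrow> (nat \<times> nat) set \<Rightarrow> bool" where
  "contains_copy n S X R \<longleftrightarrow>
     (\<exists>P' f. P' \<subseteq> S \<and> bij_betw f X P' \<and>
        (\<forall>p\<in>X. \<forall>q\<in>X. (p, q) \<in> R \<longleftrightarrow> grid_le n (f p) (f q)))"

definition poset_dim :: "nat set \<Rightarrow> (nat \<times> nat) set \<Rightarrow> nat" where
  "poset_dim X R = (LEAST d. d > 0 \<and>
     (\<exists>L :: nat \<Rightarrow> nat \<Rightarrow> nat. (\<forall>i<d. bij_betw (L i) X {1..card X}) \<and>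
        (\<forall>p\<in>X. \<forall>q\<in>X. (p, q) \<in> R \<longleftrightarrow> (\<forall>i<d. L i p \<le> L i q))))"

end

theory Submission
  imports Defs "HOL-Library.Product_Lexorder"
begin

lemma mono_into:
  fixes A B :: "nat set"
  assumes "finite A" "finite B" "card A \<le> card B"
  shows "\<exists>h. (\<forall>a\<in>A. h a \<in> B) \<and> (\<forall>a\<in>A. \<forall>a'\<in>A. a < a' \<longrightarrow> h a < h a')"
proof -
  define xs where "xs = sorted_list_of_set B"
  define r where "r a = card {x\<in>A. x < a}" for a
  have len: "length xs = card B" using assms(2) by (simp add: xs_def)
  have st: "sorted_wrt (<) xs" by (simp add: xs_def)
  have setx: "set xs = B" using assms(2) by (simp add: xs_def)
  have rlt: "r a < card A" if "a \<in> A" for a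
  proof -
    have "{x\<in>A. x < a} \<subset> A" using that by auto
    thus ?thesis unfolding r_def using assms(1) by (simp add: psubset_card_mono)
  qed
  have rmono: "r a < r a'" if "a \<in> A" "a' \<in> A" "a < a'" for a a'
  proof -
    have "{x\<in>A. x < a} \<subset> {x\<in>A. x < a'}" using that by auto
    thus ?thesis unfolding r_def using assms(1) by (simp add: psubset_card_mono)
  qed
  show ?thesis
  proof (intro exI[of _ "\<lambda>a. xs ! r a"] conjI ballI impI)
    fix a assume "a \<in> A"
    thus "xs ! r a \<in> B" using rlt len assms(3) setx nth_mem by (metis less_le_trans)
  next
    fix a a' assume "a \<in> A" "a' \<in> A" "a < a'"
    thus "xs ! r a < xs ! r a'" using rmono rlt len assms(3) st sorted_wrt_nth_less
      by (metis less_le_trans)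
  qed
qed

definition occurs :: "nat set \<Rightarrow> (nat \<Rightarrow> nat \<Rightarrow> nat) \<Rightarrow> nat set \<Rightarrow> (nat \<Rightarrow> nat) set \<Rightarrow> bool" where
  "occurs I \<sigma> X S \<longleftrightarrow> (\<exists>g. (\<forall>p\<in>X. g p \<in> S) \<and>
      (\<forall>i\<in>I. \<forall>p\<in>X. \<forall>q\<in>X. \<sigma> i p < \<sigma> i q \<longrightarrow> g p i < g q i))"

lemma occurs_image:
  assumes "occurs I \<sigma> X (f ` A)"
    and "\<And>x y i. x \<in> A \<Longrightarrow> y \<in> A \<Longrightarrow> i \<in> I \<Longrightarrow> f x i < f y i \<Longrightarrow> x i < y i"
  shows "occurs I \<sigma> X A"
proof -
  obtain g where g: "\<forall>p\<in>X. g p \<in> f ` A"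
    "\<forall>i\<in>I. \<forall>p\<in>X. \<forall>q\<in>X. \<sigma> i p < \<sigma> i q \<longrightarrow> g p i < g q i"
    using assms(1) unfolding occurs_def by blast
  define g' where "g' p = inv_into A f (g p)" for p
  have 1: "g' p \<in> A" "f (g' p) = g p" if "p \<in> X" for p
    using g(1) that by (auto simp: g'_def inv_into_into f_inv_into_f)
  have "\<forall>i\<in>I. \<forall>p\<in>X. \<forall>q\<in>X. \<sigma> i p < \<sigma> i q \<longrightarrow> g' p i < g' q i"
  proof (intro ballI impI)
    fix i p q assume "i \<in> I" "p \<in> X" "q \<in> X" "\<sigma> i p < \<sigma> i q"
    hence "f (g' p) i < f (g' q) i" using g(2) 1 by metis
    thus "g' p i < g' q i" using assms(2) 1 \<open>i \<in> I\<close> \<open>p \<in> X\<close> \<open>q \<in> X\<close> by blast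
  qed
  thus ?thesis unfolding occurs_def using 1 by blast
qed

lemma occurs_image_rev:
  assumes "occurs I \<tau> X (f ` A)"
    and "\<And>x y i. x \<in> A \<Longrightarrow> y \<in> A \<Longrightarrow> i \<in> I \<Longrightarrow> f x i < f y i \<Longrightarrow> y i < x i"
    and "\<And>i p q. i \<in> I \<Longrightarrow> p \<in> X \<Longrightarrow> q \<in> X \<Longrightarrow> \<sigma> i p < \<sigma> i q \<Longrightarrow> \<tau> i q < \<tau> i p"
  shows "occurs I \<sigma> X A"
proof -
  obtain g where g: "\<forall>p\<in>X. g p \<in> f ` A"
    "\<forall>i\<in>I. \<forall>p\<in>X. \<forall>q\<in>X. \<tau> i p < \<tau> i q \<longrightarrow> g p i < g q i"
    using assms(1) unfolding occurs_def by blast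
  define g' where "g' p = inv_into A f (g p)" for p
  have 1: "g' p \<in> A" "f (g' p) = g p" if "p \<in> X" for p
    using g(1) that by (auto simp: g'_def inv_into_into f_inv_into_f)
  have "\<forall>i\<in>I. \<forall>p\<in>X. \<forall>q\<in>X. \<sigma> i p < \<sigma> i q \<longrightarrow> g' p i < g' q i"
  proof (intro ballI impI)
    fix i p q assume "i \<in> I" "p \<in> X" "q \<in> X" "\<sigma> i p < \<sigma> i q"
    hence "\<tau> i q < \<tau> i p" using assms(3) by blast
    hence "f (g' q) i < f (g' p) i" using g(2) 1 \<open>i \<in> I\<close> \<open>p \<in> X\<close> \<open>q \<in> X\<close> by metis
    thus "g' p i < g' q i" using assms(2) 1 \<open>i \<in> I\<close> \<open>p \<in> X\<close> \<open>q \<in> X\<close> by blast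
  qed
  thus ?thesis unfolding occurs_def using 1 by blast
qed

lemma card_fibers:
  assumes "finite S"
  shows "card S = (\<Sum>b\<in>f ` S. card {x\<in>S. f x = b})"
proof -
  have "S = (\<Union>b\<in>f ` S. {x\<in>S. f x = b})" by auto
  hence "card S = card (\<Union>b\<in>f ` S. {x\<in>S. f x = b})" by simp
  also have "\<dots> = (\<Sum>b\<in>f ` S. card {x\<in>S. f x = b})"
    by (rule card_UN_disjoint) (use assms in auto)
  finally show ?thesis .
qed

definition KMprop :: "nat \<Rightarrow> nat \<Rightarrow> real \<Rightarrow> bool" where
  "KMprop d m c \<longleftrightarrow> (\<forall>I X \<sigma> t S. finite I \<and> card I = d \<and> finite X \<and> card X = m \<and>
     (\<forall>i\<in>I. inj_on (\<sigma> i) X) \<and> S \<subseteq> PiE I (\<lambda>_. {..<t}) \<and> \<not> occurs I \<sigma> X S \<longrightarrow>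
     real (card S) \<le> c * real t ^ (d - 1))"

lemma KM_base: "KMprop 1 m (real m)"
  unfolding KMprop_def
proof (intro allI impI, elim conjE)
  fix I X \<sigma> t S assume fI: "finite I" and cI: "card I = 1" and fX: "finite X" and cX: "card X = m"
    and inj: "\<forall>i\<in>I. inj_on (\<sigma> i) X" and SS: "S \<subseteq> PiE I (\<lambda>_. {..<t})" and no: "\<not> occurs I \<sigma> X S"
  obtain j where Ij: "I = {j}" using cI card_1_singletonE by blast
  have fS: "finite S" using SS finite_PiE fI by (metis finite_lessThan finite_subset)
  have injS: "inj_on (\<lambda>x. x j) S"
  proof (rule inj_onI)
    fix x y assume xy: "x \<in> S" "y \<in> S" "x j = y j"
    show "x = y"
    proof
      fix i show "x i = y i"
      proof (cases "i = j")
        case False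
        have "x \<in> PiE I (\<lambda>_. {..<t})" "y \<in> PiE I (\<lambda>_. {..<t})" using xy SS by auto
        thus ?thesis using False Ij PiE_arb[of x I _ i] PiE_arb[of y I _ i] by auto
      qed (use xy in auto)
    qed
  qed
  show "real (card S) \<le> real m * real t ^ (1 - 1)"
  proof (rule ccontr)
    assume "\<not> ?thesis"
    hence mS: "m \<le> card S" by simp
    have "card (\<sigma> j ` X) = m" using inj Ij cX card_image by auto
    hence "card (\<sigma> j ` X) \<le> card ((\<lambda>x. x j) ` S)" using mS card_image[OF injS] by simp
    then obtain h where h: "\<forall>a\<in>\<sigma> j ` X. h a \<in> (\<lambda>x. x j) ` S"
      "\<forall>a\<in>\<sigma> j ` X. \<forall>a'\<in>\<sigma> j ` X. a < a' \<longrightarrow> h a < h a'"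
      using mono_into[of "\<sigma> j ` X" "(\<lambda>x. x j) ` S"] fX fS by blast
    define g where "g p = inv_into S (\<lambda>x. x j) (h (\<sigma> j p))" for p
    have g1: "g p \<in> S" "g p j = h (\<sigma> j p)" if "p \<in> X" for p
    proof -
      have "h (\<sigma> j p) \<in> (\<lambda>x. x j) ` S" using h(1) that by auto
      from inv_into_into[OF this] f_inv_into_f[OF this]
      show "g p \<in> S" "g p j = h (\<sigma> j p)" unfolding g_def by auto
    qed
    have "occurs I \<sigma> X S" unfolding occurs_def
      apply (rule exI[of _ g]) using g1 h(2) Ij by auto
    with no show False by simp
  qed
qed

lemma KM_step_core:
  fixes I X :: "nat set" and \<sigma> :: "nat \<Rightarrow> nat \<Rightarrow> nat"
  assumes IH: "KMprop d m c'" and d1: "1 \<le> d" and m1: "1 \<le> m" and c'0: "0 \<le> c'"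
    and fI: "finite I" and cI: "card I = Suc d" and fX: "finite X" and cX: "card X = m"
    and inj: "\<forall>i\<in>I. inj_on (\<sigma> i) X"
    and s_def: "s = 4 * m^2"
    and K_def: "K = real (Suc d) * real (s choose m) * c' * real s ^ Suc d"
    and c_def: "c = real s + 2 ^ Suc d * K"
  shows "S \<subseteq> PiE I (\<lambda>_. {..<t}) \<Longrightarrow> \<not> occurs I \<sigma> X S \<Longrightarrow> real (card S) \<le> c * real t ^ d"
proof (induction t arbitrary: S rule: less_induct)
  case (less t S)
  have K0: "0 \<le> K" unfolding K_def using c'0 by simp
  have cs: "real s \<le> c" unfolding c_def using K0 by simp
  have m2: "1 \<le> m^2" using m1 by simp
  have s4: "4 \<le> s" unfolding s_def using m2 by simp
  have fS: "finite S" using less.prems(1) fI by (meson finite_PiE finite_lessThan finite_subset)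
  show ?case
  proof (cases "t \<le> s")
    case True
    have "card S \<le> card (PiE I (\<lambda>_. {..<t}))" using less.prems(1) fI by (intro card_mono finite_PiE) auto
    also have "\<dots> = t ^ Suc d" using fI cI by (simp add: card_PiE)
    finally have "real (card S) \<le> real t ^ Suc d" by (metis of_nat_le_iff of_nat_power)
    also have "\<dots> = real t * real t ^ d" by simp
    also have "\<dots> \<le> real s * real t ^ d" using True by (intro mult_right_mono) auto
    also have "\<dots> \<le> c * real t ^ d" using cs by (intro mult_right_mono) auto
    finally show ?thesis .
  next
    case False
    hence ts: "s < t" by simp
    define u where "u = (t + s - 1) div s"
    have dm: "u * s + (t + s - 1) mod s = t + s - 1" unfolding u_def by (rule div_mult_mod_eq)
    have "(t + s - 1) mod s < s" using s4 by simp
    hence tus: "t \<le> u * s" using dm s4 by linarith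
    have usle: "u * s \<le> t + s - 1" using dm by linarith
    have "t * s \<ge> t + s"
    proof -
      have "t * s = t * (s - 1) + t" using s4 by (cases s) auto
      moreover have "t * (s - 1) \<ge> 2 * (s - 1)" using ts s4 by (intro mult_right_mono) auto
      ultimately show ?thesis using s4 by linarith
    qed
    hence "u * s < t * s" using usle s4 by linarith
    hence ut: "u < t" by simp
    have u1: "1 \<le> u" using tus ts by (cases u) auto
    have us2: "real u * real s \<le> 2 * real t"
    proof -
      have "u * s \<le> 2 * t" using usle ts by linarith
      thus ?thesis by (metis of_nat_le_iff of_nat_mult of_nat_numeral)
    qed
    define \<beta> where "\<beta> x = restrict (\<lambda>i. x i div s) I" for x :: "nat \<Rightarrow> nat"
    define BS where "BS = \<beta> ` S"
    have BSsub: "BS \<subseteq> PiE I (\<lambda>_. {..<u})"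
    proof
      fix b assume "b \<in> BS"
      then obtain x where x: "x \<in> S" "b = \<beta> x" unfolding BS_def by auto
      have "x i div s < u" if "i \<in> I" for i
      proof -
        have "x i < t" using x less.prems(1) that by (auto simp: PiE_def Pi_def)
        hence "x i < u * s" using tus by linarith
        thus ?thesis by (simp add: less_mult_imp_div_less)
      qed
      thus "b \<in> PiE I (\<lambda>_. {..<u})" using x unfolding \<beta>_def by auto
    qed
    have noB: "\<not> occurs I \<sigma> X BS"
    proof
      assume "occurs I \<sigma> X BS"
      hence "occurs I \<sigma> X S" unfolding BS_def
      proof (rule occurs_image)
        fix x y i assume "i \<in> I" "\<beta> x i < \<beta> y i"
        hence "x i div s < y i div s" unfolding \<beta>_def by simp
        thus "x i < y i" by (metis div_le_mono not_less)
      qed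
      thus False using less.prems(2) by simp
    qed
    have cardBS: "real (card BS) \<le> c * real u ^ d" using less.IH[OF ut BSsub noB] .
    define Sb where "Sb b = {x\<in>S. \<beta> x = b}" for b
    have cardS: "card S = (\<Sum>b\<in>BS. card (Sb b))" unfolding BS_def Sb_def by (rule card_fibers[OF fS])
    define off where "off j b = (\<lambda>x. x j mod s) ` Sb b" for j b
    have fSb: "finite (Sb b)" for b using fS unfolding Sb_def by auto
    have decomp: "x i = b i * s + x i mod s" if "x \<in> Sb b" "i \<in> I" for x b i
    proof -
      have "b i = x i div s" using that unfolding Sb_def \<beta>_def by auto
      thus ?thesis by simp
    qed
    define \<phi> where "\<phi> x = restrict (\<lambda>j. x j mod s) I" for x :: "nat \<Rightarrow> nat"
    have injphi: "inj_on \<phi> (Sb b)" for b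
    proof (rule inj_onI)
      fix x y assume xy: "x \<in> Sb b" "y \<in> Sb b" "\<phi> x = \<phi> y"
      have xP: "x \<in> PiE I (\<lambda>_. {..<t})" "y \<in> PiE I (\<lambda>_. {..<t})" using xy less.prems(1) unfolding Sb_def by auto
      show "x = y"
      proof
        fix i show "x i = y i"
        proof (cases "i \<in> I")
          case True
          have "x i mod s = y i mod s" using xy(3) True unfolding \<phi>_def by (metis restrict_apply')
          thus ?thesis using decomp[OF xy(1) True] decomp[OF xy(2) True] by simp
        next
          case False thus ?thesis using xP PiE_arb by metis
        qed
      qed
    qed
    have cardSb_prod: "card (Sb b) \<le> (\<Prod>j\<in>I. card (off j b))" for b
    proof -
      have "card (Sb b) = card (\<phi> ` Sb b)" using card_image[OF injphi] by simp
      also have "\<dots> \<le> card (PiE I (\<lambda>j. off j b))"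
        by (intro card_mono) (auto simp: fI finite_PiE off_def fSb \<phi>_def)
      also have "\<dots> = (\<Prod>j\<in>I. card (off j b))" using fI by (simp add: card_PiE)
      finally show ?thesis .
    qed
    have offs: "off j b \<subseteq> {..<s}" for j b unfolding off_def using s4 by auto
    have cardoff: "card (off j b) \<le> s" for j b using card_mono[OF _ offs[of j b]] by simp
    define Wide where "Wide b \<longleftrightarrow> (\<exists>j\<in>I. m \<le> card (off j b))" for b
    have bnd: "card (Sb b) \<le> (m - 1) ^ Suc d + (if Wide b then s ^ Suc d else 0)" for b
    proof (cases "Wide b")
      case True
      have "card (Sb b) \<le> (\<Prod>j\<in>I. card (off j b))" by (rule cardSb_prod)
      also have "\<dots> \<le> (\<Prod>j\<in>I. s)" by (intro prod_mono) (simp add: cardoff)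
      also have "\<dots> = s ^ Suc d" using cI by simp
      finally show ?thesis using True by simp
    next
      case False
      have "card (Sb b) \<le> (\<Prod>j\<in>I. card (off j b))" by (rule cardSb_prod)
      also have "\<dots> \<le> (\<Prod>j\<in>I. m - 1)" using False unfolding Wide_def by (intro prod_mono) auto
      also have "\<dots> = (m - 1) ^ Suc d" using cI by simp
      finally show ?thesis using False by simp
    qed
    have fBS: "finite BS" unfolding BS_def using fS by simp
    have cardS2: "card S \<le> (m - 1) ^ Suc d * card BS + s ^ Suc d * card {b\<in>BS. Wide b}"
    proof -
      have "card S \<le> (\<Sum>b\<in>BS. (m - 1) ^ Suc d + (if Wide b then s ^ Suc d else 0))"
        unfolding cardS by (intro sum_mono bnd)
      also have "\<dots> = (m - 1) ^ Suc d * card BS + (\<Sum>b\<in>BS. (if Wide b then s ^ Suc d else 0))"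
        by (simp add: sum.distrib)
      also have "(\<Sum>b\<in>BS. (if Wide b then s ^ Suc d else 0)) = (\<Sum>b\<in>{b\<in>BS. Wide b}. s ^ Suc d)"
        by (rule sum.inter_filter[OF fBS, symmetric])
      finally show ?thesis by (simp add: mult.commute)
    qed
    define W where "W j = {b\<in>BS. m \<le> card (off j b)}" for j
    have Wun: "{b\<in>BS. Wide b} = (\<Union>j\<in>I. W j)" unfolding Wide_def W_def by auto
    have cardW: "real (card (W j)) \<le> real u * real (s choose m) * (c' * real u ^ (d - 1))" if jI: "j \<in> I" for j
    proof -
      define Ms where "Ms = {M. M \<subseteq> {..<s} \<and> card M = m}"
      define cls where "cls v M = {b\<in>BS. b j = v \<and> M \<subseteq> off j b}" for v M
      have fMs: "finite Ms" unfolding Ms_def by (rule finite_subset[of _ "Pow {..<s}"]) auto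
      have cMs: "card Ms = s choose m" unfolding Ms_def using n_subsets[of "{..<s}" m] by simp
      have Wsub: "W j \<subseteq> (\<Union>v\<in>{..<u}. \<Union>M\<in>Ms. cls v M)"
      proof
        fix b assume b: "b \<in> W j"
        hence bB: "b \<in> BS" and mb: "m \<le> card (off j b)" unfolding W_def by auto
        have "b j < u" using BSsub bB jI by (auto simp: PiE_def Pi_def)
        moreover obtain M where "M \<subseteq> off j b" "card M = m"
          using obtain_subset_with_card_n[OF mb] by metis
        ultimately show "b \<in> (\<Union>v\<in>{..<u}. \<Union>M\<in>Ms. cls v M)"
          using offs[of j b] bB unfolding Ms_def cls_def by blast
      qed
      have clsb: "real (card (cls v M)) \<le> c' * real u ^ (d - 1)" if MMs: "M \<in> Ms" for v M
      proof -
        define \<pi> where "\<pi> b = restrict b (I - {j})" for b :: "nat \<Rightarrow> nat"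
        have injpi: "inj_on \<pi> (cls v M)"
        proof (rule inj_onI)
          fix b b' assume bb: "b \<in> cls v M" "b' \<in> cls v M" "\<pi> b = \<pi> b'"
          have bP: "b \<in> PiE I (\<lambda>_. {..<u})" "b' \<in> PiE I (\<lambda>_. {..<u})"
            using bb BSsub unfolding cls_def by auto
          show "b = b'"
          proof
            fix i show "b i = b' i"
            proof (cases "i \<in> I")
              case True
              show ?thesis
              proof (cases "i = j")
                case True thus ?thesis using bb unfolding cls_def by auto
              next
                case False
                thus ?thesis using bb(3) \<open>i \<in> I\<close> unfolding \<pi>_def by (metis DiffI restrict_apply' singletonD)
              qed
            next
              case False thus ?thesis using bP PiE_arb by metis
            qed
          qed
        qed
        have sub: "\<pi> ` cls v M \<subseteq> PiE (I - {j}) (\<lambda>_. {..<u})"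
          using BSsub unfolding \<pi>_def cls_def by (auto simp: PiE_def Pi_def)
        have noc: "\<not> occurs (I - {j}) \<sigma> X (\<pi> ` cls v M)"
        proof
          assume "occurs (I - {j}) \<sigma> X (\<pi> ` cls v M)"
          then obtain g where g1: "\<forall>p\<in>X. g p \<in> \<pi> ` cls v M"
            and g2: "\<forall>i\<in>I - {j}. \<forall>p\<in>X. \<forall>q\<in>X. \<sigma> i p < \<sigma> i q \<longrightarrow> g p i < g q i"
            unfolding occurs_def by blast
          define bp where "bp p = inv_into (cls v M) \<pi> (g p)" for p
          have bp: "bp p \<in> cls v M" "\<pi> (bp p) = g p" if "p \<in> X" for p
          proof -
            have "g p \<in> \<pi> ` cls v M" using g1 that by auto
            from inv_into_into[OF this] f_inv_into_f[OF this]
            show "bp p \<in> cls v M" "\<pi> (bp p) = g p" unfolding bp_def by auto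
          qed
          have fM: "finite M" using MMs unfolding Ms_def by (auto intro: finite_subset)
          have "card (\<sigma> j ` X) = m" using inj jI cX card_image by auto
          hence "card (\<sigma> j ` X) \<le> card M" using MMs unfolding Ms_def by simp
          then obtain h where h1: "\<forall>a\<in>\<sigma> j ` X. h a \<in> M"
            and h2: "\<forall>a\<in>\<sigma> j ` X. \<forall>a'\<in>\<sigma> j ` X. a < a' \<longrightarrow> h a < h a'"
            using mono_into[of "\<sigma> j ` X" M] fX fM by blast
          have ex: "\<exists>x. x \<in> Sb (bp p) \<and> x j mod s = h (\<sigma> j p)" if "p \<in> X" for p
          proof -
            have "h (\<sigma> j p) \<in> off j (bp p)" using h1 bp(1)[OF that] that unfolding cls_def by auto
            thus ?thesis unfolding off_def by auto
          qed
          define xp where "xp p = (SOME x. x \<in> Sb (bp p) \<and> x j mod s = h (\<sigma> j p))" for p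
          have xp: "xp p \<in> Sb (bp p)" "xp p j mod s = h (\<sigma> j p)" if "p \<in> X" for p
            using someI_ex[OF ex[OF that]] unfolding xp_def by auto
          have "occurs I \<sigma> X S" unfolding occurs_def
          proof (intro exI[of _ xp] conjI ballI impI)
            fix p assume "p \<in> X" thus "xp p \<in> S" using xp(1) unfolding Sb_def by auto
          next
            fix i p q assume iI: "i \<in> I" and pX: "p \<in> X" and qX: "q \<in> X" and lt: "\<sigma> i p < \<sigma> i q"
            show "xp p i < xp q i"
            proof (cases "i = j")
              case True
              have bj: "bp p j = v" "bp q j = v" using bp(1) pX qX unfolding cls_def by auto
              have "xp p j = v * s + h (\<sigma> j p)" using decomp[OF xp(1)[OF pX] jI] xp(2)[OF pX] bj by simp
              moreover have "xp q j = v * s + h (\<sigma> j q)" using decomp[OF xp(1)[OF qX] jI] xp(2)[OF qX] bj by simp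
              moreover have "h (\<sigma> j p) < h (\<sigma> j q)" using h2 lt True pX qX by auto
              ultimately show ?thesis using True by simp
            next
              case False
              have iIj: "i \<in> I - {j}" using False iI by auto
              have e: "g r i = xp r i div s" if "r \<in> X" for r
              proof -
                have "g r i = bp r i" using bp(2)[OF that] iIj unfolding \<pi>_def by (metis restrict_apply')
                also have "\<dots> = \<beta> (xp r) i" using xp(1)[OF that] unfolding Sb_def by auto
                also have "\<dots> = xp r i div s" using iI unfolding \<beta>_def by simp
                finally show ?thesis .
              qed
              have "g p i < g q i" using g2 iIj pX qX lt by blast
              hence "xp p i div s < xp q i div s" using e pX qX by simp
              thus ?thesis by (metis div_le_mono not_less)
            qed
          qed
          thus False using less.prems(2) by simp
        qed
        have cd: "card (I - {j}) = d" using cI jI fI by simp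
        have "real (card (\<pi> ` cls v M)) \<le> c' * real u ^ (d - 1)"
          using IH[unfolded KMprop_def, rule_format, of "I - {j}" X \<sigma> "\<pi> ` cls v M" u] sub noc fI fX cX inj cd
        by auto
        then show ?thesis using card_image[OF injpi] by simp
      qed
      have fcls: "finite (cls v M)" for v M unfolding cls_def using fBS by auto
      have "card (W j) \<le> card (\<Union>v\<in>{..<u}. \<Union>M\<in>Ms. cls v M)"
        by (rule card_mono[OF _ Wsub]) (use fcls fMs in auto)
      also have "\<dots> \<le> (\<Sum>v\<in>{..<u}. card (\<Union>M\<in>Ms. cls v M))" by (rule card_UN_le) simp
      also have "\<dots> \<le> (\<Sum>v\<in>{..<u}. \<Sum>M\<in>Ms. card (cls v M))"
        by (intro sum_mono card_UN_le fMs)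
      finally have "real (card (W j)) \<le> (\<Sum>v\<in>{..<u}. \<Sum>M\<in>Ms. real (card (cls v M)))"
        by (simp only: of_nat_le_iff of_nat_sum[symmetric])
      also have "\<dots> \<le> (\<Sum>v\<in>{..<u}. \<Sum>M\<in>Ms. c' * real u ^ (d - 1))"
        by (intro sum_mono clsb)
      also have "\<dots> = real u * real (s choose m) * (c' * real u ^ (d - 1))" using cMs by simp
      finally show ?thesis .
    qed
    have cardWide: "real (card {b\<in>BS. Wide b}) \<le> real (Suc d) * (real u * real (s choose m) * (c' * real u ^ (d - 1)))"
    proof -
      have "card {b\<in>BS. Wide b} \<le> (\<Sum>j\<in>I. card (W j))" unfolding Wun by (rule card_UN_le[OF fI])
      hence "real (card {b\<in>BS. Wide b}) \<le> (\<Sum>j\<in>I. real (card (W j)))" by (metis of_nat_le_iff of_nat_sum)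
      also have "\<dots> \<le> (\<Sum>j\<in>I. real u * real (s choose m) * (c' * real u ^ (d - 1)))"
        by (intro sum_mono cardW)
      also have "\<dots> = real (Suc d) * (real u * real (s choose m) * (c' * real u ^ (d - 1)))" using cI by simp
      finally show ?thesis .
    qed
    define A where "A = real ((m - 1) ^ Suc d)"
    have A0: "0 \<le> A" unfolding A_def by simp
    have uu: "real u * real u ^ (d - 1) = real u ^ d" using d1 by (cases d) auto
    have st1: "real (card S) \<le> (A * c + K) * real u ^ d"
    proof -
      have "real (card S) \<le> A * real (card BS) + real s ^ Suc d * real (card {b\<in>BS. Wide b})"
        using cardS2 unfolding A_def by (metis of_nat_add of_nat_le_iff of_nat_mult of_nat_power)
      also have "\<dots> \<le> A * (c * real u ^ d) + real s ^ Suc d * (real (Suc d) * (real u * real (s choose m) * (c' * real u ^ (d - 1))))"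
        by (intro add_mono mult_left_mono cardBS cardWide A0) simp
      also have "\<dots> = (A * c + K) * real u ^ d"
        unfolding K_def by (simp only: uu[symmetric]) (simp add: algebra_simps)
      finally show ?thesis .
    qed
    have spos: "0 < real s" using s4 by simp
    have e2: "real u ^ d * real s ^ d \<le> 2 ^ d * real t ^ d"
    proof -
      have "real u ^ d * real s ^ d = (real u * real s) ^ d" by (simp add: power_mult_distrib)
      also have "\<dots> \<le> (2 * real t) ^ d" by (intro power_mono us2) simp
      also have "\<dots> = 2 ^ d * real t ^ d" by (simp add: power_mult_distrib)
      finally show ?thesis .
    qed
    have Abound: "A * 2 ^ Suc d \<le> real s ^ d"
    proof -
      have "(m - 1) ^ Suc d \<le> m ^ Suc d" by (intro power_mono) auto
      also have "\<dots> \<le> m ^ (2 * d)" using m1 d1 by (intro power_increasing) auto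
      finally have a1: "(m - 1) ^ Suc d \<le> m ^ (2 * d)" .
      have a2: "(2::nat) ^ Suc d \<le> 2 ^ (2 * d)" using d1 by (intro power_increasing) auto
      have "(m - 1) ^ Suc d * 2 ^ Suc d \<le> m ^ (2 * d) * 2 ^ (2 * d)" using a1 a2 by (rule mult_le_mono)
      also have "\<dots> = s ^ d"
      proof -
        have "s ^ d = 4 ^ d * (m ^ 2) ^ d" unfolding s_def by (rule power_mult_distrib)
        also have "(m ^ 2) ^ d = m ^ (2 * d)" by (simp only: power_mult)
        also have "(4::nat) ^ d = 2 ^ (2 * d)" by (simp only: power_mult) simp
        finally show ?thesis by simp
      qed
      finally have "(m - 1) ^ Suc d * 2 ^ Suc d \<le> s ^ d" .
      hence "real ((m - 1) ^ Suc d * 2 ^ Suc d) \<le> real (s ^ d)" by (simp only: of_nat_le_iff)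
      thus ?thesis unfolding A_def by simp
    qed
    have c0: "0 \<le> c" using cs by simp
    have sd1: "1 \<le> real s ^ d" using s4 by simp
    have e1: "(A * c + K) * 2 ^ d \<le> c * real s ^ d"
    proof -
      have "A * 2 ^ d * c \<le> (real s ^ d / 2) * c" using Abound c0 by (intro mult_right_mono) auto
      moreover have "K * 2 ^ d \<le> c / 2" unfolding c_def using spos K0 by (simp add: field_simps)
      moreover have "c / 2 \<le> c * real s ^ d / 2" using c0 sd1 by (simp add: mult_le_cancel_left1)
      ultimately show ?thesis by (simp add: algebra_simps)
    qed
    have "real (card S) * real s ^ d \<le> (A * c + K) * (real u ^ d * real s ^ d)"
      using mult_right_mono[OF st1, of "real s ^ d"] by (simp add: mult.assoc)
    also have "\<dots> \<le> (A * c + K) * (2 ^ d * real t ^ d)"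
      using e2 A0 c0 K0 by (intro mult_left_mono) auto
    also have "\<dots> = ((A * c + K) * 2 ^ d) * real t ^ d" by simp
    also have "\<dots> \<le> (c * real s ^ d) * real t ^ d" using e1 by (intro mult_right_mono) auto
    also have "\<dots> = (c * real t ^ d) * real s ^ d" by simp
    finally show ?thesis using spos by (simp add: mult_le_cancel_right)
  qed
qed

lemma KM_exists:
  assumes m1: "1 \<le> m"
  shows "1 \<le> d \<Longrightarrow> \<exists>c\<ge>0. KMprop d m c"
proof (induction d rule: nat_induct_at_least)
  case base show ?case using KM_base by (intro exI[of _ "real m"]) auto
next
  case (Suc d)
  then obtain c' where c': "0 \<le> c'" "KMprop d m c'" by blast
  define s where "s = 4 * m^2"
  define K where "K = real (Suc d) * real (s choose m) * c' * real s ^ Suc d"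
  define c where "c = real s + 2 ^ Suc d * K"
  have "0 \<le> c" unfolding c_def K_def using c'(1) by simp
  moreover have "KMprop (Suc d) m c" unfolding KMprop_def
  proof (intro allI impI, elim conjE)
    fix I X \<sigma> t S
    assume a: "finite I" "card I = Suc d" "finite X" "card X = m" "\<forall>i\<in>I. inj_on (\<sigma> i) X"
      "S \<subseteq> PiE I (\<lambda>_. {..<t})" "\<not> occurs I \<sigma> X S"
    have "real (card S) \<le> c * real t ^ d"
      using KM_step_core[OF c'(2) Suc.hyps(1) m1 c'(1) a(1-5) s_def K_def c_def a(6,7)] .
    thus "real (card S) \<le> c * real t ^ (Suc d - 1)" by simp
  qed
  ultimately show ?case by blast
qed

lemma rank_props:
  fixes key :: "nat \<Rightarrow> 'b::linorder"
  assumes fX: "finite X" and inj: "inj_on key X"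
    and L_def: "\<And>x. L x = card {y\<in>X. key y < key x} + 1"
  shows "bij_betw L X {1..card X}"
    and "\<And>x y. x\<in>X \<Longrightarrow> y\<in>X \<Longrightarrow> key x < key y \<Longrightarrow> L x < L y"
proof -
  show mono: "\<And>x y. x\<in>X \<Longrightarrow> y\<in>X \<Longrightarrow> key x < key y \<Longrightarrow> L x < L y"
  proof -
    fix x y assume xy: "x\<in>X" "y\<in>X" "key x < key y"
    have "{z\<in>X. key z < key x} \<subset> {z\<in>X. key z < key y}" using xy by auto
    hence "card {z\<in>X. key z < key x} < card {z\<in>X. key z < key y}"
      using fX by (intro psubset_card_mono) auto
    thus "L x < L y" using L_def by simp
  qed
  have injL: "inj_on L X"
  proof (rule inj_onI)
    fix x y assume xy: "x \<in> X" "y \<in> X" "L x = L y"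
    show "x = y"
    proof (rule ccontr)
      assume "x \<noteq> y"
      hence "key x \<noteq> key y" using inj xy by (auto dest: inj_onD)
      hence "key x < key y \<or> key y < key x" by auto
      thus False using mono xy by fastforce
    qed
  qed
  have sub: "L ` X \<subseteq> {1..card X}"
  proof
    fix z assume "z \<in> L ` X"
    then obtain x where x: "x \<in> X" "z = L x" by auto
    have "{y\<in>X. key y < key x} \<subseteq> X - {x}" by auto
    hence "card {y\<in>X. key y < key x} \<le> card (X - {x})" using fX by (intro card_mono) auto
    also have "\<dots> = card X - 1" using x fX by simp
    finally have "card {y\<in>X. key y < key x} \<le> card X - 1" .
    moreover have "card X \<ge> 1" using x fX by (metis One_nat_def Suc_leI card_gt_0_iff empty_iff)
    ultimately show "z \<in> {1..card X}" using x L_def by auto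
  qed
  have "card (L ` X) = card {1..card X}" using card_image[OF injL] by simp
  hence "L ` X = {1..card X}" using sub by (intro card_subset_eq) auto
  thus "bij_betw L X {1..card X}" using injL by (simp add: bij_betw_def)
qed

lemma dim_exists:
  fixes X :: "nat set" and R :: "(nat \<times> nat) set"
  assumes fX: "finite X" and ne: "X \<noteq> {}" and po: "partial_order_on X R"
  shows "\<exists>L. (\<forall>i<card X. bij_betw (L i) X {1..card X}) \<and>
           (\<forall>p\<in>X. \<forall>q\<in>X. (p,q)\<in>R \<longleftrightarrow> (\<forall>i<card X. L i p \<le> L i q))"
proof -
  have refl: "\<And>x. x \<in> X \<Longrightarrow> (x,x) \<in> R" and tr: "trans R" and anti: "antisym R"
    using po unfolding partial_order_on_def preorder_on_def refl_on_def by auto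
  define h where "h x = card {y\<in>X. (y,x)\<in>R}" for x
  define key :: "nat \<Rightarrow> nat \<Rightarrow> nat \<times> nat \<times> nat" where
    "key q x = (if (x,q)\<in>R then 0 else 1, h x, x)" for q x
  define en where "en i = sorted_list_of_set X ! i" for i
  define L where "L i x = card {y\<in>X. key (en i) y < key (en i) x} + 1" for i x
  have injk: "inj_on (key q) X" for q by (rule inj_onI) (simp add: key_def)
  have rp: "bij_betw (L i) X {1..card X}"
      "\<And>x y. x\<in>X \<Longrightarrow> y\<in>X \<Longrightarrow> key (en i) x < key (en i) y \<Longrightarrow> L i x < L i y" for i
    using rank_props[OF fX injk[of "en i"], of "L i"] by (auto simp: L_def)
  have kmono: "key q x < key q y" if xy: "x \<in> X" "y \<in> X" "(x,y) \<in> R" "x \<noteq> y" for q x y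
  proof -
    have fl: "(y,q) \<in> R \<Longrightarrow> (x,q) \<in> R" using tr xy(3) by (meson transD)
    have "{z\<in>X. (z,x)\<in>R} \<subset> {z\<in>X. (z,y)\<in>R}"
    proof
      show "{z\<in>X. (z,x)\<in>R} \<subseteq> {z\<in>X. (z,y)\<in>R}" using tr xy(3) by (auto dest: transD)
      have "y \<in> {z\<in>X. (z,y)\<in>R}" using refl xy by auto
      moreover have "y \<notin> {z\<in>X. (z,x)\<in>R}" using anti xy(3,4) by (auto dest: antisymD)
      ultimately show "{z\<in>X. (z,x)\<in>R} \<noteq> {z\<in>X. (z,y)\<in>R}" by blast
    qed
    hence "h x < h y" unfolding h_def using fX by (intro psubset_card_mono) auto
    thus ?thesis using fl unfolding key_def by auto
  qed
  show ?thesis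
  proof (intro exI[of _ L] conjI allI impI ballI iffI)
    fix i show "bij_betw (L i) X {1..card X}" by (rule rp(1))
  next
    fix p q i assume pq: "p \<in> X" "q \<in> X" "(p,q)\<in>R" "i < card X"
    show "L i p \<le> L i q"
    proof (cases "p = q")
      case False thus ?thesis using rp(2) kmono pq by (meson less_imp_le)
    qed simp
  next
    fix p q assume pq: "p \<in> X" "q \<in> X" and all: "\<forall>i<card X. L i p \<le> L i q"
    show "(p,q) \<in> R"
    proof (rule ccontr)
      assume nr: "(p,q) \<notin> R"
      have "q \<in> set (sorted_list_of_set X)" using pq fX by simp
      then obtain i where i: "i < length (sorted_list_of_set X)" "sorted_list_of_set X ! i = q"
        by (metis in_set_conv_nth)
      have ic: "i < card X" using i fX by simp
      have "key (en i) q < key (en i) p" using i nr refl pq unfolding key_def en_def by auto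
      hence "L i q < L i p" using rp(2) pq by blast
      thus False using all ic by fastforce
    qed
  qed
qed

lemma poset_dim_props:
  fixes X :: "nat set" and R :: "(nat \<times> nat) set"
  assumes fX: "finite X" and ne: "X \<noteq> {}" and po: "partial_order_on X R"
  shows "poset_dim X R > 0 \<and> (\<exists>L. (\<forall>i<poset_dim X R. bij_betw (L i) X {1..card X}) \<and>
           (\<forall>p\<in>X. \<forall>q\<in>X. (p,q)\<in>R \<longleftrightarrow> (\<forall>i<poset_dim X R. L i p \<le> L i q)))"
proof -
  have "card X > 0" using fX ne by (simp add: card_gt_0_iff)
  hence ex: "\<exists>d. d > 0 \<and> (\<exists>L :: nat \<Rightarrow> nat \<Rightarrow> nat. (\<forall>i<d. bij_betw (L i) X {1..card X}) \<and>
        (\<forall>p\<in>X. \<forall>q\<in>X. (p, q) \<in> R \<longleftrightarrow> (\<forall>i<d. L i p \<le> L i q)))"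
    using dim_exists[OF fX ne po] by blast
  show ?thesis unfolding poset_dim_def by (rule LeastI_ex[OF ex])
qed

lemma occurs_copy:
  fixes X :: "nat set" and R :: "(nat \<times> nat) set"
  assumes d0: "0 < d" and dn: "d \<le> n"
    and bij: "\<forall>i<d. bij_betw (L i) X {1..card X}"
    and ord: "\<forall>p\<in>X. \<forall>q\<in>X. (p,q)\<in>R \<longleftrightarrow> (\<forall>i<d. L i p \<le> L i q)"
    and occ: "occurs {0..<n} (\<lambda>i. L (if i < d then i else 0)) X S"
  shows "contains_copy n S X R"
proof -
  define \<sigma> where "\<sigma> i = L (if i < d then i else 0)" for i
  obtain g where g1: "\<forall>p\<in>X. g p \<in> S"
    and g2: "\<forall>i\<in>{0..<n}. \<forall>p\<in>X. \<forall>q\<in>X. \<sigma> i p < \<sigma> i q \<longrightarrow> g p i < g q i"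
    using occ unfolding occurs_def \<sigma>_def by blast
  have inj0: "inj_on (L 0) X" using bij d0 by (auto simp: bij_betw_def)
  have n0: "0 < n" using d0 dn by simp
  have injg: "inj_on g X"
  proof (rule inj_onI)
    fix p q assume pq: "p \<in> X" "q \<in> X" "g p = g q"
    show "p = q"
    proof (rule ccontr)
      assume "p \<noteq> q"
      hence "L 0 p \<noteq> L 0 q" using inj0 pq by (auto dest: inj_onD)
      hence "\<sigma> 0 p < \<sigma> 0 q \<or> \<sigma> 0 q < \<sigma> 0 p" unfolding \<sigma>_def using d0 by auto
      moreover have z: "0 \<in> {0..<n}" using n0 by simp
      ultimately have "g p 0 < g q 0 \<or> g q 0 < g p 0" using g2 pq(1,2) by blast
      thus False using pq by simp
    qed
  qed
  have key: "(p,q) \<in> R \<longleftrightarrow> grid_le n (g p) (g q)" if pq: "p \<in> X" "q \<in> X" for p q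
  proof
    assume pqR: "(p,q) \<in> R"
    show "grid_le n (g p) (g q)" unfolding grid_le_def
    proof (intro allI impI)
      fix i assume "i < n"
      show "g p i \<le> g q i"
      proof (cases "p = q")
        case False
        have "(if i < d then i else 0) < d" using d0 by auto
        hence le: "\<sigma> i p \<le> \<sigma> i q" using ord pq pqR unfolding \<sigma>_def by blast
        have "inj_on (\<sigma> i) X" unfolding \<sigma>_def using bij \<open>(if i < d then i else 0) < d\<close>
          by (auto simp: bij_betw_def)
        hence "\<sigma> i p \<noteq> \<sigma> i q" using False pq by (auto dest: inj_onD)
        hence "\<sigma> i p < \<sigma> i q" using le by simp
        thus ?thesis using g2 pq \<open>i < n\<close> by fastforce
      qed simp
    qed
  next
    assume gl: "grid_le n (g p) (g q)"
    show "(p,q) \<in> R" unfolding ord[rule_format, OF pq]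
    proof (intro allI impI)
      fix i assume id: "i < d"
      show "L i p \<le> L i q"
      proof (rule ccontr)
        assume "\<not> L i p \<le> L i q"
        hence "\<sigma> i q < \<sigma> i p" unfolding \<sigma>_def using id by simp
        hence "g q i < g p i" using g2 pq id dn by fastforce
        moreover have "g p i \<le> g q i" using gl id dn unfolding grid_le_def by auto
        ultimately show False by simp
      qed
    qed
  qed
  show ?thesis unfolding contains_copy_def
    using g1 injg key by (intro exI[of _ "g ` X"] exI[of _ g]) (auto simp: bij_betw_def)
qed

lemma abel_identity:
  fixes s w :: "nat \<Rightarrow> real"
  shows "(\<Sum>i\<le>N. s i * w i) = (\<Sum>i\<le>N. s i) * w N + (\<Sum>i<N. (\<Sum>j\<le>i. s j) * (w i - w (Suc i)))"
proof (induction N)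
  case 0 show ?case by simp
next
  case (Suc N)
  have "(\<Sum>i\<le>Suc N. s i * w i) = (\<Sum>i\<le>N. s i * w i) + s (Suc N) * w (Suc N)" by simp
  also have "\<dots> = (\<Sum>i\<le>N. s i) * w N + (\<Sum>i<N. (\<Sum>j\<le>i. s j) * (w i - w (Suc i))) + s (Suc N) * w (Suc N)"
    using Suc by simp
  also have "\<dots> = (\<Sum>i\<le>Suc N. s i) * w (Suc N) + (\<Sum>i<Suc N. (\<Sum>j\<le>i. s j) * (w i - w (Suc i)))"
    by (simp add: algebra_simps)
  finally show ?case .
qed

lemma bern_step:
  fixes i p :: nat
  shows "1 - (real (i+1) / real (i+2)) ^ p \<le> real p / real (i+2)"
proof -
  have "1 + real p * (- 1 / real (i+2)) \<le> (1 + (- 1 / real (i+2))) ^ p"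
    by (rule Bernoulli_inequality) (simp add: field_simps)
  moreover have "1 + (- 1 / real (i+2)) = real (i+1) / real (i+2)" by (simp add: field_simps)
  ultimately show ?thesis by (simp add: field_simps)
qed

lemma ln_step:
  fixes i :: nat
  shows "1 / real (i+2) \<le> ln (real (i+2)) - ln (real (i+1))"
proof -
  have "ln (real (i+1) / real (i+2)) \<le> real (i+1) / real (i+2) - 1"
    by (rule ln_le_minus_one) simp
  moreover have "ln (real (i+1) / real (i+2)) = ln (real (i+1)) - ln (real (i+2))"
    by (simp add: ln_div)
  moreover have "real (i+1) / real (i+2) - 1 = - (1 / real (i+2))" by (simp add: field_simps)
  ultimately show ?thesis by linarith
qed

lemma abel_bound:
  fixes s :: "nat \<Rightarrow> real" and p N :: nat
  assumes s0: "\<And>i. 0 \<le> s i" and c0: "0 \<le> c"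
    and pre: "\<And>r. r \<le> N \<Longrightarrow> (\<Sum>i\<le>r. s i) \<le> c * real (r+1) ^ p"
  shows "(\<Sum>i\<le>N. s i / real (i+1) ^ p) \<le> c * (1 + real p * ln (real (N+1)))"
proof -
  define w where "w i = 1 / real (i+1) ^ p" for i
  have wpos: "0 < real (i+1) ^ p" for i by simp
  have wdec: "w (Suc i) \<le> w i" for i unfolding w_def
    by (intro divide_left_mono power_mono) auto
  have "(\<Sum>i\<le>N. s i / real (i+1) ^ p) = (\<Sum>i\<le>N. s i * w i)" unfolding w_def by simp
  also have "\<dots> = (\<Sum>i\<le>N. s i) * w N + (\<Sum>i<N. (\<Sum>j\<le>i. s j) * (w i - w (Suc i)))"
    by (rule abel_identity)
  also have "\<dots> \<le> c + (\<Sum>i<N. c * (real p * (ln (real (Suc i + 1)) - ln (real (i + 1)))))"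
  proof (rule add_mono)
    have "(\<Sum>i\<le>N. s i) * w N \<le> (c * real (N+1) ^ p) * w N"
      using pre[of N] by (intro mult_right_mono) (auto simp: w_def)
    also have "\<dots> = c" unfolding w_def using wpos[of N] by simp
    finally show "(\<Sum>i\<le>N. s i) * w N \<le> c" .
  next
    show "(\<Sum>i<N. (\<Sum>j\<le>i. s j) * (w i - w (Suc i)))
        \<le> (\<Sum>i<N. c * (real p * (ln (real (Suc i + 1)) - ln (real (i + 1)))))"
    proof (rule sum_mono)
      fix i assume "i \<in> {..<N}"
      hence iN: "i \<le> N" by simp
      have "(\<Sum>j\<le>i. s j) * (w i - w (Suc i)) \<le> (c * real (i+1) ^ p) * (w i - w (Suc i))"
        using pre[OF iN] wdec[of i] by (intro mult_right_mono) auto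
      also have "\<dots> = c * (1 - (real (i+1) / real (i+2)) ^ p)"
        unfolding w_def using wpos[of i] wpos[of "Suc i"]
        by (simp add: field_simps power_divide)
      also have "\<dots> \<le> c * (real p / real (i+2))"
        using bern_step[of i p] c0 by (intro mult_left_mono) auto
      also have "\<dots> \<le> c * (real p * (ln (real (Suc i + 1)) - ln (real (i + 1))))"
      proof -
        have "real p * (1 / real (i+2)) \<le> real p * (ln (real (i+2)) - ln (real (i+1)))"
          by (rule mult_left_mono[OF ln_step]) simp
        moreover have "Suc i + 1 = i + 2" by simp
        ultimately show ?thesis using c0 by (intro mult_left_mono) auto
      qed
      finally show "(\<Sum>j\<le>i. s j) * (w i - w (Suc i))
          \<le> c * (real p * (ln (real (Suc i + 1)) - ln (real (i + 1))))" .
    qed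
  qed
  also have "(\<Sum>i<N. c * (real p * (ln (real (Suc i + 1)) - ln (real (i + 1)))))
      = c * real p * (\<Sum>i<N. ln (real (Suc i + 1)) - ln (real (i + 1)))"
    by (simp add: sum_distrib_left mult.assoc)
  also have "(\<Sum>i<N. ln (real (Suc i + 1)) - ln (real (i + 1))) = ln (real (N + 1))"
    using sum_lessThan_telescope[of "\<lambda>i. ln (real (i + 1))" N] by simp
  finally show ?thesis by (simp add: algebra_simps)
qed

lemma occurs_mono: "occurs I \<sigma> X A \<Longrightarrow> A \<subseteq> B \<Longrightarrow> occurs I \<sigma> X B"
  unfolding occurs_def by blast

lemma grid_coord: "x \<in> grid k n \<Longrightarrow> j < n \<Longrightarrow> 1 \<le> x j \<and> x j \<le> k"
  by (auto simp: grid_def PiE_def Pi_def)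

lemma grid_out: "x \<in> grid k n \<Longrightarrow> \<not> j < n \<Longrightarrow> x j = undefined"
  unfolding grid_def by (rule PiE_arb) auto

lemma finite_grid: "finite (grid k n)"
  unfolding grid_def by (intro finite_PiE) auto

lemma grid_sum_lower:
  assumes x: "x \<in> grid k n" and j: "j < n"
  shows "x j + (n - 1) \<le> (\<Sum>l<n. x l)"
proof -
  have "(\<Sum>l<n. x l) = x j + (\<Sum>l\<in>{..<n}-{j}. x l)" using sum.remove[of "{..<n}" j x] j by simp
  moreover have "(\<Sum>l\<in>{..<n}-{j}. (1::nat)) \<le> (\<Sum>l\<in>{..<n}-{j}. x l)"
    by (rule sum_mono) (use grid_coord x in auto)
  moreover have "(\<Sum>l\<in>{..<n}-{j}. (1::nat)) = n - 1" using j by simp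
  ultimately show ?thesis by linarith
qed

lemma grid_sum_upper:
  assumes x: "x \<in> grid k n" and j: "j < n"
  shows "(\<Sum>l<n. x l) \<le> x j + (n - 1) * k"
proof -
  have "(\<Sum>l<n. x l) = x j + (\<Sum>l\<in>{..<n}-{j}. x l)" using sum.remove[of "{..<n}" j x] j by simp
  moreover have "(\<Sum>l\<in>{..<n}-{j}. x l) \<le> (\<Sum>l\<in>{..<n}-{j}. k)"
    by (rule sum_mono) (use grid_coord x in auto)
  moreover have "(\<Sum>l\<in>{..<n}-{j}. k) = (n - 1) * k" using j by simp
  ultimately show ?thesis by linarith
qed

lemma grid_sum_ge: "x \<in> grid k n \<Longrightarrow> n \<le> (\<Sum>l<n. x l)"
proof -
  assume x: "x \<in> grid k n"
  have "(\<Sum>l<n. (1::nat)) \<le> (\<Sum>l<n. x l)" by (rule sum_mono) (use grid_coord x in auto)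
  thus ?thesis by simp
qed

lemma grid_sum_le: "x \<in> grid k n \<Longrightarrow> (\<Sum>l<n. x l) \<le> k * n"
proof -
  assume x: "x \<in> grid k n"
  have "(\<Sum>l<n. x l) \<le> (\<Sum>l<n. k)" by (rule sum_mono) (use grid_coord x in auto)
  thus ?thesis by (simp add: mult.commute)
qed

lemma bottom_bound:
  assumes n1: "1 \<le> n" and SS: "S \<subseteq> grid k n" and KM: "KMprop n m c"
    and fX: "finite X" and cX: "card X = m"
    and inj: "\<forall>i\<in>{0..<n}. inj_on (\<sigma> i) X" and no: "\<not> occurs {0..<n} \<sigma> X S"
  shows "real (card {x\<in>S. (\<Sum>j<n. x j) \<le> n + r}) \<le> c * real (min r (k-1) + 1) ^ (n-1)"
proof -
  define A where "A = {x\<in>S. (\<Sum>j<n. x j) \<le> n + r}"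
  define \<phi> where "\<phi> x = restrict (\<lambda>j. x j - 1) {0..<n}" for x :: "nat \<Rightarrow> nat"
  have Ag: "A \<subseteq> grid k n" using SS by (auto simp: A_def)
  have injA: "inj_on \<phi> A"
  proof (rule inj_onI)
    fix x y assume xy: "x\<in>A" "y\<in>A" "\<phi> x = \<phi> y"
    have xg: "x \<in> grid k n" and yg: "y \<in> grid k n" using xy Ag by auto
    show "x = y"
    proof
      fix j show "x j = y j"
      proof (cases "j < n")
        case True
        have "\<phi> x j = \<phi> y j" using xy(3) by simp
        hence "x j - 1 = y j - 1" using True unfolding \<phi>_def by simp
        thus ?thesis using grid_coord[OF xg True] grid_coord[OF yg True] by auto
      next
        case False thus ?thesis using grid_out xg yg by metis
      qed
    qed
  qed
  have sub: "\<phi> ` A \<subseteq> PiE {0..<n} (\<lambda>_. {..<min r (k-1) + 1})"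
  proof
    fix z assume "z \<in> \<phi> ` A"
    then obtain x where x: "x \<in> A" "z = \<phi> x" by auto
    have xg: "x \<in> grid k n" using x Ag by auto
    have "x j - 1 < min r (k-1) + 1" if "j < n" for j
    proof -
      have "x j + (n-1) \<le> n + r" using grid_sum_lower[OF xg that] x(1) unfolding A_def by auto
      moreover have "1 \<le> x j \<and> x j \<le> k" using grid_coord[OF xg that] .
      ultimately show ?thesis using n1 by auto
    qed
    thus "z \<in> PiE {0..<n} (\<lambda>_. {..<min r (k-1) + 1})" using x unfolding \<phi>_def by auto
  qed
  have noA: "\<not> occurs {0..<n} \<sigma> X (\<phi> ` A)"
  proof
    assume "occurs {0..<n} \<sigma> X (\<phi> ` A)"
    hence "occurs {0..<n} \<sigma> X A"
      by (rule occurs_image) (auto simp: \<phi>_def)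
    hence "occurs {0..<n} \<sigma> X S" by (rule occurs_mono) (auto simp: A_def)
    with no show False ..
  qed
  have "real (card (\<phi> ` A)) \<le> c * real (min r (k-1) + 1) ^ (n - 1)"
    using KM[unfolded KMprop_def, rule_format, of "{0..<n}" X \<sigma> "\<phi> ` A" "min r (k-1) + 1"]
      sub noA fX cX inj by auto
  thus ?thesis using card_image[OF injA] unfolding A_def by simp
qed

lemma top_bound:
  assumes n1: "1 \<le> n" and SS: "S \<subseteq> grid k n" and KM: "KMprop n m c"
    and fX: "finite X" and cX: "card X = m"
    and inj: "\<forall>i\<in>{0..<n}. inj_on (\<sigma> i) X" and no: "\<not> occurs {0..<n} \<sigma> X S"
    and bM: "\<forall>i\<in>{0..<n}. \<forall>p\<in>X. \<sigma> i p \<le> M"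
  shows "real (card {x\<in>S. k * n \<le> (\<Sum>j<n. x j) + r}) \<le> c * real (min r (k-1) + 1) ^ (n-1)"
proof -
  define \<tau> where "\<tau> i p = M - \<sigma> i p" for i p
  define A where "A = {x\<in>S. k * n \<le> (\<Sum>j<n. x j) + r}"
  define \<phi> where "\<phi> x = restrict (\<lambda>j. k - x j) {0..<n}" for x :: "nat \<Rightarrow> nat"
  have Ag: "A \<subseteq> grid k n" using SS by (auto simp: A_def)
  have injA: "inj_on \<phi> A"
  proof (rule inj_onI)
    fix x y assume xy: "x\<in>A" "y\<in>A" "\<phi> x = \<phi> y"
    have xg: "x \<in> grid k n" and yg: "y \<in> grid k n" using xy Ag by auto
    show "x = y"
    proof
      fix j show "x j = y j"
      proof (cases "j < n")
        case True
        have "\<phi> x j = \<phi> y j" using xy(3) by simp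
        hence "k - x j = k - y j" using True unfolding \<phi>_def by simp
        thus ?thesis using grid_coord[OF xg True] grid_coord[OF yg True] by auto
      next
        case False thus ?thesis using grid_out xg yg by metis
      qed
    qed
  qed
  have sub: "\<phi> ` A \<subseteq> PiE {0..<n} (\<lambda>_. {..<min r (k-1) + 1})"
  proof
    fix z assume "z \<in> \<phi> ` A"
    then obtain x where x: "x \<in> A" "z = \<phi> x" by auto
    have xg: "x \<in> grid k n" using x Ag by auto
    have "k - x j < min r (k-1) + 1" if "j < n" for j
    proof -
      have "k * n \<le> x j + (n - 1) * k + r" using grid_sum_upper[OF xg that] x(1) unfolding A_def by auto
      moreover have "k * n = (n - 1) * k + k" using n1 by (cases n) auto
      ultimately have "k \<le> x j + r" by linarith
      moreover have "1 \<le> x j \<and> x j \<le> k" using grid_coord[OF xg that] .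
      ultimately show ?thesis by linarith
    qed
    thus "z \<in> PiE {0..<n} (\<lambda>_. {..<min r (k-1) + 1})" using x unfolding \<phi>_def by auto
  qed
  have injt: "\<forall>i\<in>{0..<n}. inj_on (\<tau> i) X"
  proof
    fix i assume i: "i \<in> {0..<n}"
    show "inj_on (\<tau> i) X"
    proof (rule inj_onI)
      fix p q assume "p \<in> X" "q \<in> X" "\<tau> i p = \<tau> i q"
      moreover have "\<sigma> i p \<le> M" "\<sigma> i q \<le> M" using bM i \<open>p \<in> X\<close> \<open>q \<in> X\<close> by auto
      ultimately have "\<sigma> i p = \<sigma> i q" unfolding \<tau>_def by arith
      thus "p = q" using inj i \<open>p \<in> X\<close> \<open>q \<in> X\<close> by (auto dest: inj_onD)
    qed
  qed
  have noA: "\<not> occurs {0..<n} \<tau> X (\<phi> ` A)"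
  proof
    assume "occurs {0..<n} \<tau> X (\<phi> ` A)"
    hence "occurs {0..<n} \<sigma> X A"
    proof (rule occurs_image_rev)
      fix x y i assume "x \<in> A" "y \<in> A" "i \<in> {0..<n}" "\<phi> x i < \<phi> y i"
      thus "y i < x i" unfolding \<phi>_def by auto
    next
      fix i p q assume "i \<in> {0..<n}" "p \<in> X" "q \<in> X" "\<sigma> i p < \<sigma> i q"
      moreover have "\<sigma> i q \<le> M" using bM \<open>i \<in> {0..<n}\<close> \<open>q \<in> X\<close> by auto
      ultimately show "\<tau> i q < \<tau> i p" unfolding \<tau>_def by arith
    qed
    hence "occurs {0..<n} \<sigma> X S" by (rule occurs_mono) (auto simp: A_def)
    with no show False ..
  qed
  have "real (card (\<phi> ` A)) \<le> c * real (min r (k-1) + 1) ^ (n - 1)"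
    using KM[unfolded KMprop_def, rule_format, of "{0..<n}" X \<tau> "\<phi> ` A" "min r (k-1) + 1"]
      sub noA fX cX injt by auto
  thus ?thesis using card_image[OF injA] unfolding A_def by simp
qed

lemma level_prefix:
  assumes SS: "S \<subseteq> grid k n"
  shows "(\<Sum>i\<le>r. card (S \<inter> grid_level k n i)) = card {x\<in>S. (\<Sum>j<n. x j) \<le> n + r}"
proof -
  have eq: "{x\<in>S. (\<Sum>j<n. x j) \<le> n + r} = (\<Union>i\<in>{..r}. S \<inter> grid_level k n i)"
  proof
    show "{x\<in>S. (\<Sum>j<n. x j) \<le> n + r} \<subseteq> (\<Union>i\<in>{..r}. S \<inter> grid_level k n i)"
    proof
      fix x assume x: "x \<in> {x\<in>S. (\<Sum>j<n. x j) \<le> n + r}"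
      hence xg: "x \<in> grid k n" using SS by auto
      have "n \<le> (\<Sum>j<n. x j)" using grid_sum_ge[OF xg] .
      hence "x \<in> S \<inter> grid_level k n ((\<Sum>j<n. x j) - n)" "(\<Sum>j<n. x j) - n \<le> r"
        using x xg unfolding grid_level_def by auto
      thus "x \<in> (\<Union>i\<in>{..r}. S \<inter> grid_level k n i)" by blast
    qed
  qed (auto simp: grid_level_def)
  have "card (\<Union>i\<in>{..r}. S \<inter> grid_level k n i) = (\<Sum>i\<le>r. card (S \<inter> grid_level k n i))"
  proof (rule card_UN_disjoint)
    show "\<forall>i\<in>{..r}. finite (S \<inter> grid_level k n i)"
      using finite_subset[OF SS finite_grid] by auto
  qed (auto simp: grid_level_def)
  with eq show ?thesis by simp
qed

lemma level_suffix:
  assumes SS: "S \<subseteq> grid k n" and k1: "1 \<le> k" and rN: "r \<le> k * n - n"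
  shows "(\<Sum>i\<le>r. card (S \<inter> grid_level k n (k * n - n - i))) = card {x\<in>S. k * n \<le> (\<Sum>j<n. x j) + r}"
proof -
  have kn: "n \<le> k * n" using k1 by simp
  have eq: "{x\<in>S. k * n \<le> (\<Sum>j<n. x j) + r} = (\<Union>i\<in>{..r}. S \<inter> grid_level k n (k * n - n - i))"
  proof
    show "{x\<in>S. k * n \<le> (\<Sum>j<n. x j) + r} \<subseteq> (\<Union>i\<in>{..r}. S \<inter> grid_level k n (k * n - n - i))"
    proof
      fix x assume x: "x \<in> {x\<in>S. k * n \<le> (\<Sum>j<n. x j) + r}"
      hence xg: "x \<in> grid k n" using SS by auto
      have a: "n \<le> (\<Sum>j<n. x j)" using grid_sum_ge[OF xg] .
      have b: "(\<Sum>j<n. x j) \<le> k * n" using grid_sum_le[OF xg] .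
      define i where "i = k * n - (\<Sum>j<n. x j)"
      have "i \<le> r" using x unfolding i_def by auto
      moreover have "(\<Sum>j<n. x j) = n + (k * n - n - i)" using a b kn unfolding i_def by linarith
      ultimately show "x \<in> (\<Union>i\<in>{..r}. S \<inter> grid_level k n (k * n - n - i))"
        using x xg unfolding grid_level_def by auto
    qed
  next
    show "(\<Union>i\<in>{..r}. S \<inter> grid_level k n (k * n - n - i)) \<subseteq> {x\<in>S. k * n \<le> (\<Sum>j<n. x j) + r}"
      using rN kn by (auto simp: grid_level_def)
  qed
  have "card (\<Union>i\<in>{..r}. S \<inter> grid_level k n (k * n - n - i)) = (\<Sum>i\<le>r. card (S \<inter> grid_level k n (k * n - n - i)))"
  proof (rule card_UN_disjoint)
    show "\<forall>i\<in>{..r}. finite (S \<inter> grid_level k n (k * n - n - i))"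
      using finite_subset[OF SS finite_grid] by auto
  qed (use rN in \<open>auto simp: grid_level_def\<close>)
  with eq show ?thesis by simp
qed

lemma distrib_sum:
  fixes B :: nat
  shows "R \<le> p * B \<Longrightarrow> \<exists>z::nat\<Rightarrow>nat. (\<forall>j<p. z j \<le> B) \<and> (\<Sum>j<p. z j) = R"
proof (induction p arbitrary: R)
  case 0 thus ?case by (intro exI[of _ "\<lambda>_. 0"]) simp
next
  case (Suc p)
  define a where "a = min B R"
  have "R - a \<le> p * B" using Suc.prems unfolding a_def by (cases "R \<le> B") auto
  then obtain z where z: "\<forall>j<p. z j \<le> B" "(\<Sum>j<p. z j) = R - a" using Suc.IH by blast
  have s: "(\<Sum>j<p. (z(p := a)) j) = (\<Sum>j<p. z j)" by (rule sum.cong) auto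
  have "a \<le> R" unfolding a_def by simp
  hence "(\<Sum>j<Suc p. (z(p := a)) j) = R" using s z(2) by simp
  moreover have "\<forall>j<Suc p. (z(p := a)) j \<le> B" using z(1) unfolding a_def by (auto simp: less_Suc_eq)
  ultimately show ?case by blast
qed

lemma level_card_lower:
  assumes n1: "1 \<le> n" and k1: "1 \<le> k" and iN: "i \<le> k * n - n"
    and q1: "(n - 1) * Q \<le> i" and q2: "(n - 1) * Q \<le> k * n - n - i"
    and q3: "(n - 1) * Q \<le> k - 1" and q4: "Q \<le> k - 1"
  shows "(Q + 1) ^ (n - 1) \<le> card (grid_level k n i)"
proof -
  obtain p where np: "n = Suc p" using n1 by (cases n) auto
  define K where "K = k - 1"
  have kK: "k = K + 1" using k1 K_def by simp
  have NK: "k * n - n = K + p * K" using kK np by (simp add: algebra_simps)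
  have QK: "Q \<le> K" using q4 K_def by simp
  have pQK: "p * Q \<le> p * K" using QK by simp
  have pKQ: "p * (K - Q) + p * Q = p * K" using pQK by (simp add: diff_mult_distrib2)
  have q1': "p * Q \<le> i" and q2': "p * Q \<le> K + p * K - i" and q3': "p * Q \<le> K"
    using q1 q2 q3 np NK K_def by auto
  define zp where "zp = max (p * Q) (i - p * (K - Q))"
  have iN': "i \<le> K + p * K" using iN NK by simp
  have zpi: "zp \<le> i" using q1' unfolding zp_def by (simp add: max_def)
  have "i - p * (K - Q) \<le> K" using q2' iN' pKQ by linarith
  hence zpK: "zp \<le> K" using q3' unfolding zp_def by (simp add: max_def)
  have pQzp: "p * Q \<le> zp" unfolding zp_def by simp
  have Rb: "i - zp \<le> p * (K - Q)"
  proof -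
    have "\<And>a b i::nat. i - max a (i - b) \<le> b" by (simp add: max_def, arith)
    thus ?thesis unfolding zp_def by blast
  qed
  obtain z where z: "\<forall>j<p. z j \<le> K - Q" "(\<Sum>j<p. z j) = i - zp" using distrib_sum[OF Rb] by blast
  define D where "D = PiE {0..<p} (\<lambda>_. {..Q})"
  define \<psi> where "\<psi> y = restrict (\<lambda>j. if j < p then z j + y j + 1 else zp - (\<Sum>l<p. y l) + 1) {0..<n}"
    for y :: "nat \<Rightarrow> nat"
  have sumy: "(\<Sum>l<p. y l) \<le> p * Q" if "y \<in> D" for y
  proof -
    have "(\<Sum>l<p. y l) \<le> (\<Sum>l<p. Q)" by (rule sum_mono) (use that in \<open>auto simp: D_def PiE_def Pi_def\<close>)
    thus ?thesis by simp
  qed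
  have inD: "\<psi> ` D \<subseteq> grid_level k n i"
  proof
    fix a assume "a \<in> \<psi> ` D"
    then obtain y where y: "y \<in> D" "a = \<psi> y" by auto
    have yQ: "y j \<le> Q" if "j < p" for j using y(1) that by (auto simp: D_def PiE_def Pi_def)
    have sy: "(\<Sum>l<p. y l) \<le> p * Q" using sumy[OF y(1)] .
    have ag: "a \<in> grid k n"
      unfolding grid_def y(2) \<psi>_def
    proof (subst restrict_PiE, rule Pi_I)
      fix j assume j: "j \<in> {0..<n}"
      show "(if j < p then z j + y j + 1 else zp - (\<Sum>l<p. y l) + 1) \<in> {1..k}"
      proof (cases "j < p")
        case True
        have "z j \<le> K - Q" "y j \<le> Q" using z(1) yQ True by auto
        thus ?thesis using True QK kK by auto
      next
        case False thus ?thesis using zpK kK by auto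
      qed
    qed
    have "(\<Sum>j<n. a j) = (\<Sum>j<p. a j) + a p" using np by simp
    also have "(\<Sum>j<p. a j) = (\<Sum>j<p. z j + y j + 1)"
      by (rule sum.cong) (auto simp: y(2) \<psi>_def np)
    also have "\<dots> = (i - zp) + (\<Sum>l<p. y l) + p" by (simp only: sum.distrib) (simp add: z(2))
    also have "a p = zp - (\<Sum>l<p. y l) + 1" by (simp add: y(2) \<psi>_def np)
    finally have "(\<Sum>j<n. a j) = (i - zp) + (\<Sum>l<p. y l) + p + (zp - (\<Sum>l<p. y l) + 1)" .
    hence "(\<Sum>j<n. a j) = n + i" using zpi pQzp sy np by linarith
    thus "a \<in> grid_level k n i" using ag unfolding grid_level_def by auto
  qed
  have injD: "inj_on \<psi> D"
  proof (rule inj_onI)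
    fix y y' assume yy: "y \<in> D" "y' \<in> D" "\<psi> y = \<psi> y'"
    show "y = y'"
    proof
      fix j show "y j = y' j"
      proof (cases "j < p")
        case True
        have "\<psi> y j = \<psi> y' j" using yy(3) by simp
        thus ?thesis using True np unfolding \<psi>_def by simp
      next
        case False thus ?thesis using yy(1,2) unfolding D_def by (metis PiE_arb atLeastLessThan_iff)
      qed
    qed
  qed
  have cD: "card D = (Q + 1) ^ p" unfolding D_def by (simp add: card_PiE)
  have fin: "finite (grid_level k n i)"
    by (rule finite_subset[OF _ finite_grid]) (auto simp: grid_level_def)
  have "card D = card (\<psi> ` D)" using card_image[OF injD] by simp
  also have "\<dots> \<le> card (grid_level k n i)" by (rule card_mono[OF fin inD])
  finally show ?thesis using cD np by simp
qed

lemma mass_bound: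
  assumes n1: "1 \<le> n" and k2: "2 \<le> k" and SS: "S \<subseteq> grid k n" and c0: "0 \<le> c"
    and pre: "\<And>r. real (card {x\<in>S. (\<Sum>j<n. x j) \<le> n + r}) \<le> c * real (min r (k-1) + 1) ^ (n-1)"
    and suf: "\<And>r. real (card {x\<in>S. k * n \<le> (\<Sum>j<n. x j) + r}) \<le> c * real (min r (k-1) + 1) ^ (n-1)"
  shows "lubell_mass k n S \<le> c * (real n ^ (n-1) * (3 + 2 * real (n-1) * ln (real (k*n - n + 1))))"
proof -
  define N where "N = k * n - n"
  define K where "K = k - 1"
  define p where "p = n - 1"
  define s where "s i = real (card (S \<inter> grid_level k n i))" for i
  define w where "w x = 1 / real (x+1) ^ p" for x :: nat
  have NK: "N = n * K" unfolding N_def K_def by (simp add: algebra_simps diff_mult_distrib2)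
  have KN: "K \<le> N" using NK n1 by simp
  have s0: "0 \<le> s i" for i unfolding s_def by simp
  have w0: "0 \<le> w x" for x unfolding w_def by simp
  have key: "s i / real (card (grid_level k n i)) \<le> real n ^ p * (s i * w i + s i * w (N - i) + s i * w K)"
    if iN: "i \<le> N" for i
  proof -
    define \<mu> where "\<mu> = min i (min (N - i) K)"
    define Q where "Q = \<mu> div n"
    have nQ: "n * Q \<le> \<mu>" unfolding Q_def by (metis div_times_less_eq_dividend mult.commute)
    have nQ': "(n - 1) * Q \<le> n * Q" by simp
    have Qle: "Q \<le> n * Q" using n1 by simp
    have lc: "(Q + 1) ^ (n - 1) \<le> card (grid_level k n i)"
    proof (rule level_card_lower[OF n1])
      show "1 \<le> k" using k2 by simp
      show "i \<le> k * n - n" using iN N_def by simp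
      show "(n - 1) * Q \<le> i" using nQ nQ' unfolding \<mu>_def by linarith
      show "(n - 1) * Q \<le> k * n - n - i" using nQ nQ' unfolding \<mu>_def N_def by linarith
      show "(n - 1) * Q \<le> k - 1" using nQ nQ' unfolding \<mu>_def K_def by linarith
      show "Q \<le> k - 1" using nQ Qle unfolding \<mu>_def K_def by linarith
    qed
    have mu1: "\<mu> + 1 \<le> n * (Q + 1)"
    proof -
      have "\<mu> = n * Q + \<mu> mod n" unfolding Q_def by simp
      moreover have "\<mu> mod n < n" using n1 by simp
      ultimately show ?thesis by (simp add: algebra_simps)
    qed
    have npos: "0 < real n" using n1 by simp
    have "real (\<mu> + 1) \<le> real (n * (Q + 1))" using mu1 by (simp only: of_nat_le_iff)
    hence a1: "real (\<mu> + 1) / real n \<le> real (Q + 1)"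
      using npos by (simp add: divide_le_eq algebra_simps)
    have a2: "(real (\<mu> + 1) / real n) ^ p \<le> real (card (grid_level k n i))"
    proof -
      have "(real (\<mu> + 1) / real n) ^ p \<le> real (Q + 1) ^ p" using a1 by (intro power_mono) auto
      also have "\<dots> \<le> real (card (grid_level k n i))"
      proof -
        have "real ((Q + 1) ^ p) \<le> real (card (grid_level k n i))" using lc unfolding p_def by (simp only: of_nat_le_iff)
        thus ?thesis by simp
      qed
      finally show ?thesis .
    qed
    have bpos: "0 < (real (\<mu> + 1) / real n) ^ p" using npos by simp
    have "s i / real (card (grid_level k n i)) \<le> s i / (real (\<mu> + 1) / real n) ^ p"
      using a2 bpos s0[of i] by (intro divide_left_mono) auto
    also have "\<dots> = real n ^ p * (s i * w \<mu>)"
      unfolding w_def using npos by (simp add: power_divide field_simps)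
    also have "\<dots> \<le> real n ^ p * (s i * w i + s i * w (N - i) + s i * w K)"
    proof (intro mult_left_mono)
      have "w \<mu> \<le> w i + w (N - i) + w K"
        using w0[of i] w0[of "N - i"] w0[of K] unfolding \<mu>_def
        by (cases "i \<le> min (N - i) K"; cases "N - i \<le> K") (auto simp: min_def)
      thus "s i * w \<mu> \<le> s i * w i + s i * w (N - i) + s i * w K"
        using s0[of i] by (metis distrib_left mult_left_mono)
    qed simp
    finally show ?thesis .
  qed
  have T1: "(\<Sum>i\<le>N. s i * w i) \<le> c * (1 + real p * ln (real (N + 1)))"
  proof -
    have "(\<Sum>i\<le>N. s i / real (i+1) ^ p) \<le> c * (1 + real p * ln (real (N + 1)))"
    proof (rule abel_bound[OF s0 c0])
      fix r assume "r \<le> N"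
      have "(\<Sum>i\<le>r. s i) = real (card {x\<in>S. (\<Sum>j<n. x j) \<le> n + r})"
        unfolding s_def using level_prefix[OF SS, of r] by (simp flip: of_nat_sum)
      also have "\<dots> \<le> c * real (min r (k-1) + 1) ^ (n-1)" by (rule pre)
      also have "\<dots> \<le> c * real (r + 1) ^ p" unfolding p_def using c0
        by (intro mult_left_mono power_mono) auto
      finally show "(\<Sum>i\<le>r. s i) \<le> c * real (r + 1) ^ p" .
    qed
    thus ?thesis unfolding w_def by simp
  qed
  have T2: "(\<Sum>i\<le>N. s i * w (N - i)) \<le> c * (1 + real p * ln (real (N + 1)))"
  proof -
    have "(\<Sum>i\<le>N. s i * w (N - i)) = (\<Sum>i=0..N. s i * w (N - i))" by (simp add: atMost_atLeast0)
    also have "\<dots> = (\<Sum>i=0..N. s (N + 0 - i) * w (N - (N + 0 - i)))" by (rule sum.atLeastAtMost_rev)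
    also have "\<dots> = (\<Sum>i\<le>N. s (N - i) * w i)"
      unfolding atMost_atLeast0 by (rule sum.cong) auto
    also have "\<dots> = (\<Sum>i\<le>N. s (N - i) / real (i+1) ^ p)" unfolding w_def by simp
    also have "\<dots> \<le> c * (1 + real p * ln (real (N + 1)))"
    proof (rule abel_bound[OF s0 c0])
      fix r assume rN: "r \<le> N"
      have "(\<Sum>i\<le>r. s (N - i)) = real (card {x\<in>S. k * n \<le> (\<Sum>j<n. x j) + r})"
      proof -
        have k1: "1 \<le> k" using k2 by simp
        have "(\<Sum>i\<le>r. card (S \<inter> grid_level k n (k * n - n - i))) = card {x\<in>S. k * n \<le> (\<Sum>j<n. x j) + r}"
          by (rule level_suffix[OF SS k1]) (use rN in \<open>simp add: N_def\<close>)
        thus ?thesis unfolding s_def N_def by (simp flip: of_nat_sum)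
      qed
      also have "\<dots> \<le> c * real (min r (k-1) + 1) ^ (n-1)" by (rule suf)
      also have "\<dots> \<le> c * real (r + 1) ^ p" unfolding p_def using c0
        by (intro mult_left_mono power_mono) auto
      finally show "(\<Sum>i\<le>r. s (N - i)) \<le> c * real (r + 1) ^ p" .
    qed
    finally show ?thesis .
  qed
  have T3: "(\<Sum>i\<le>N. s i * w K) \<le> c"
  proof -
    have sumS: "(\<Sum>i\<le>N. s i) \<le> c * real (K + 1) ^ p"
    proof -
      have "(\<Sum>i\<le>N. s i) = real (card {x\<in>S. (\<Sum>j<n. x j) \<le> n + N})"
        unfolding s_def using level_prefix[OF SS, of N] by (simp flip: of_nat_sum)
      also have "\<dots> \<le> c * real (min N (k-1) + 1) ^ (n-1)" by (rule pre)
      also have "min N (k-1) = K" using KN K_def by simp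
      finally show ?thesis unfolding p_def .
    qed
    have "(\<Sum>i\<le>N. s i * w K) = (\<Sum>i\<le>N. s i) * w K" by (simp add: sum_distrib_right)
    also have "\<dots> \<le> (c * real (K + 1) ^ p) * w K" by (rule mult_right_mono[OF sumS w0])
    also have "\<dots> = c" unfolding w_def by simp
    finally show ?thesis .
  qed
  have "lubell_mass k n S = (\<Sum>i=0..N. s i / real (card (grid_level k n i)))"
    unfolding lubell_mass_def N_def s_def by simp
  also have "\<dots> = (\<Sum>i\<le>N. s i / real (card (grid_level k n i)))" by (simp add: atMost_atLeast0)
  also have "\<dots> \<le> (\<Sum>i\<le>N. real n ^ p * (s i * w i + s i * w (N - i) + s i * w K))"
    by (intro sum_mono key) simp
  also have "\<dots> = real n ^ p * ((\<Sum>i\<le>N. s i * w i) + (\<Sum>i\<le>N. s i * w (N - i)) + (\<Sum>i\<le>N. s i * w K))"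
    by (simp only: sum_distrib_left[symmetric] sum.distrib)
  also have "\<dots> \<le> real n ^ p * (c * (1 + real p * ln (real (N + 1))) + c * (1 + real p * ln (real (N + 1))) + c)"
    by (intro mult_left_mono add_mono T1 T2 T3) simp
  also have "\<dots> = c * (real n ^ (n-1) * (3 + 2 * real (n-1) * ln (real (k*n - n + 1))))"
    unfolding p_def N_def by (simp add: algebra_simps)
  finally show ?thesis .
qed

lemma ln_final:
  assumes n1: "1 \<le> n" and k2: "2 \<le> k"
  shows "3 + 2 * real (n-1) * ln (real (k*n - n + 1)) \<le> (3 / ln 2 + 2 * real (n-1) * (ln (real n) / ln 2 + 1)) * ln (real k)"
proof -
  have l2: "0 < ln (2::real)" by simp
  have lk: "ln 2 \<le> ln (real k)" using k2 by simp
  have lkp: "0 < ln (real k)" using l2 lk by linarith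
  have r1: "1 \<le> ln (real k) / ln 2" using lk l2 by simp
  have ln0: "0 \<le> ln (real n)" using n1 by simp
  have "real (k*n - n + 1) \<le> real n * real k"
  proof -
    have "n \<le> k * n" using k2 by simp
    hence "k * n - n + 1 \<le> k * n" using n1 by linarith
    hence "real (k * n - n + 1) \<le> real (k * n)" by (simp only: of_nat_le_iff)
    thus ?thesis by (simp add: mult.commute)
  qed
  hence "ln (real (k*n - n + 1)) \<le> ln (real n * real k)" by (intro ln_mono) auto
  also have "\<dots> = ln (real n) + ln (real k)" using n1 k2 by (simp add: ln_mult)
  finally have a: "ln (real (k*n - n + 1)) \<le> ln (real n) + ln (real k)" .
  have b: "ln (real n) \<le> ln (real n) / ln 2 * ln (real k)"
    using mult_left_mono[OF r1 ln0] by (simp add: field_simps)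
  have c: "3 \<le> 3 / ln 2 * ln (real k)" using r1 by (simp add: field_simps)
  have d: "ln (real (k*n - n + 1)) \<le> ln (real n) / ln 2 * ln (real k) + ln (real k)" using a b by linarith
  have "2 * real (n-1) * ln (real (k*n - n + 1)) \<le> 2 * real (n-1) * (ln (real n) / ln 2 * ln (real k) + ln (real k))"
    using d by (intro mult_left_mono) auto
  thus ?thesis using c by (simp add: algebra_simps)
qed

definition cK :: "nat \<Rightarrow> nat \<Rightarrow> real" where
  "cK n m = (SOME c. 0 \<le> c \<and> KMprop n m c)"

definition Bn :: "nat \<Rightarrow> real" where
  "Bn n = real n ^ (n - 1) * (3 / ln 2 + 2 * real (n - 1) * (ln (real n) / ln 2 + 1))"

definition En :: "nat \<Rightarrow> nat \<Rightarrow> real" where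
  "En n m = max 0 (cK n m) * Bn n"

lemma Bn_nonneg: "0 \<le> Bn n"
proof (cases "n = 0")
  case True thus ?thesis by (simp add: Bn_def)
next
  case False
  hence "0 \<le> ln (real n)" by simp
  thus ?thesis unfolding Bn_def by (intro mult_nonneg_nonneg add_nonneg_nonneg) auto
qed

lemma En_nonneg: "0 \<le> En n m"
  unfolding En_def using Bn_nonneg by simp

lemma bound_n:
  fixes X :: "nat set" and R :: "(nat \<times> nat) set"
  assumes fX: "finite X" and ne: "X \<noteq> {}" and po: "partial_order_on X R"
    and dn: "poset_dim X R \<le> n" and k2: "2 \<le> k" and SS: "S \<subseteq> grid k n"
    and nc: "\<not> contains_copy n S X R"
  shows "lubell_mass k n S \<le> En n (card X) * ln (real k)"
proof -
  define d where "d = poset_dim X R"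
  define m where "m = card X"
  obtain L where d0: "0 < d" and bij: "\<forall>i<d. bij_betw (L i) X {1..card X}"
    and ord: "\<forall>p\<in>X. \<forall>q\<in>X. (p,q)\<in>R \<longleftrightarrow> (\<forall>i<d. L i p \<le> L i q)"
    using poset_dim_props[OF fX ne po] unfolding d_def by blast
  have dn': "d \<le> n" using dn d_def by simp
  have n1: "1 \<le> n" using d0 dn' by simp
  have m1: "1 \<le> m" using fX ne unfolding m_def by (simp add: Suc_leI card_gt_0_iff)
  define \<sigma> where "\<sigma> i = L (if i < d then i else 0)" for i
  have idx: "(if i < d then i else 0) < d" for i using d0 by simp
  have no: "\<not> occurs {0..<n} \<sigma> X S"
  proof
    assume "occurs {0..<n} \<sigma> X S"
    hence "contains_copy n S X R" using occurs_copy[OF d0 dn' bij ord] unfolding \<sigma>_def by blast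
    with nc show False ..
  qed
  have inj: "\<forall>i\<in>{0..<n}. inj_on (\<sigma> i) X"
    using bij idx unfolding \<sigma>_def by (auto simp: bij_betw_def)
  have bM: "\<forall>i\<in>{0..<n}. \<forall>p\<in>X. \<sigma> i p \<le> m"
  proof (intro ballI)
    fix i p assume "i \<in> {0..<n}" "p \<in> X"
    hence "\<sigma> i p \<in> {1..card X}" using bij idx unfolding \<sigma>_def by (meson bij_betwE)
    thus "\<sigma> i p \<le> m" unfolding m_def by simp
  qed
  have ex: "\<exists>c. 0 \<le> c \<and> KMprop n m c" using KM_exists[OF m1 n1] by blast
  have cK: "0 \<le> cK n m" "KMprop n m (cK n m)" using someI_ex[OF ex] unfolding cK_def by auto
  have pre: "real (card {x\<in>S. (\<Sum>j<n. x j) \<le> n + r}) \<le> cK n m * real (min r (k-1) + 1) ^ (n-1)" for r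
    by (rule bottom_bound[OF n1 SS cK(2) fX m_def[symmetric] inj no])
  have suf: "real (card {x\<in>S. k * n \<le> (\<Sum>j<n. x j) + r}) \<le> cK n m * real (min r (k-1) + 1) ^ (n-1)" for r
    by (rule top_bound[OF n1 SS cK(2) fX m_def[symmetric] inj no bM])
  have "lubell_mass k n S \<le> cK n m * (real n ^ (n-1) * (3 + 2 * real (n-1) * ln (real (k*n - n + 1))))"
    by (rule mass_bound[OF n1 k2 SS cK(1) pre suf])
  also have "\<dots> \<le> cK n m * (real n ^ (n-1) * ((3 / ln 2 + 2 * real (n-1) * (ln (real n) / ln 2 + 1)) * ln (real k)))"
    using ln_final[OF n1 k2] cK(1) by (intro mult_left_mono) auto
  also have "\<dots> = En n m * ln (real k)" unfolding En_def Bn_def using cK(1) by simp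
  finally show ?thesis unfolding m_def .
qed

theorem mainTheorem6:
  shows "\<exists>\<alpha> :: nat \<Rightarrow> real. \<forall>(X :: nat set) (R :: (nat \<times> nat) set).
     finite X \<and> R \<subseteq> X \<times> X \<and> partial_order_on X R \<longrightarrow>
     (\<exists>C :: real. \<forall>n k S. n \<ge> poset_dim X R \<and> k \<ge> 2 \<and> S \<subseteq> grid k n \<and>
        \<not> contains_copy n S X R \<longrightarrow>
        lubell_mass k n S \<le> C * \<alpha> n * ln (real k))"
proof (intro exI[of _ "\<lambda>n. 1 + (\<Sum>m'\<le>n. En n m')"] allI impI, elim conjE)
  fix X :: "nat set" and R :: "(nat \<times> nat) set"
  assume fX: "finite X" and RX: "R \<subseteq> X \<times> X" and po: "partial_order_on X R"
  define \<alpha> where "\<alpha> n = 1 + (\<Sum>m'\<le>n. En n m')" for n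
  show "\<exists>C. \<forall>n k S. poset_dim X R \<le> n \<and> 2 \<le> k \<and> S \<subseteq> grid k n \<and> \<not> contains_copy n S X R \<longrightarrow>
      lubell_mass k n S \<le> C * (1 + (\<Sum>m'\<le>n. En n m')) * ln (real k)"
  proof (cases "X = {}")
    case True
    have "contains_copy n S X R" for n S
      unfolding contains_copy_def using True by (intro exI[of _ "{}"] exI[of _ id] conjI) (auto simp: bij_betw_def)
    thus ?thesis by blast
  next
    case False
    define m where "m = card X"
    define C where "C = 1 + (\<Sum>n'<m. En n' m)"
    have a1: "1 \<le> \<alpha> n" for n unfolding \<alpha>_def by (simp add: En_nonneg sum_nonneg)
    have C1: "1 \<le> C" unfolding C_def by (simp add: En_nonneg sum_nonneg)
    have EC: "En n m \<le> C * \<alpha> n" for n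
    proof (cases "m \<le> n")
      case True
      have "En n m \<le> (\<Sum>m'\<le>n. En n m')"
        by (rule member_le_sum) (use True En_nonneg in auto)
      hence "En n m \<le> \<alpha> n" unfolding \<alpha>_def by simp
      also have "\<dots> \<le> C * \<alpha> n" using C1 a1[of n] by simp
      finally show ?thesis .
    next
      case False
      have "En n m \<le> (\<Sum>n'<m. En n' m)"
        by (rule member_le_sum[where f = "\<lambda>n'. En n' m"]) (use False En_nonneg in auto)
      hence "En n m \<le> C" unfolding C_def by simp
      also have "\<dots> \<le> C * \<alpha> n" using C1 a1[of n] by simp
      finally show ?thesis .
    qed
    show ?thesis
    proof (intro exI[of _ C] allI impI, elim conjE)
      fix n k S assume dn: "poset_dim X R \<le> n" and k2: "2 \<le> k" and SS: "S \<subseteq> grid k n"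
        and nc: "\<not> contains_copy n S X R"
      have "lubell_mass k n S \<le> En n m * ln (real k)"
        using bound_n[OF fX False po dn k2 SS nc] unfolding m_def .
      also have "\<dots> \<le> C * \<alpha> n * ln (real k)"
        using EC[of n] k2 by (intro mult_right_mono) auto
      finally show "lubell_mass k n S \<le> C * (1 + (\<Sum>m'\<le>n. En n m')) * ln (real k)"
        unfolding \<alpha>_def .
    qed
  qed
qed

end
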